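(* Let $G$ be a finite simple undirected graph on $n\ge1$ vertices. Then every coalition game $\mathcal G$ over $G$ satisfies $\dfrac{\rho^f(\mathcal G)}{\rho(\mathcal G)}\le 2\sqrt n$.
   Context: Coalition game over $G=(V,E)$: a valuation $v:2^V\to\mathbb Z_{\ge0}$ with $v(\emptyset)=0$, $v(S)=0$ whenever $G[S]$ is disconnected, $v$ not identically zero. $\rho^f(\mathcal G)=\max\{\sum_S v(S)y_S: y\ge0,\ \sum_{S\ni i}y_S\le1\ \forall i\in V\}$, and $\rho(\mathcal G)$ is the same maximum over $0/1$ vectors $y$ (equivalently, the maximum of $\sum v(S)$ over families of pairwise disjoint subsets of $V$). *)

theory Defs
  imports "HOL-Analysis.Analysis"
begin

definition simple_graph :: "'a set \<Rightarrow> ('a \<Rightarrow> 'a \<Rightarrow> bool) \<Rightarrow> bool" where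
  "simple_graph V E \<longleftrightarrow> finite V \<and> (\<forall>x y. E x y \<longrightarrow> E y x) \<and> (\<forall>x. \<not> E x x)
     \<and> (\<forall>x y. E x y \<longrightarrow> x \<in> V \<and> y \<in> V)"

definition induced_connected :: "('a \<Rightarrow> 'a \<Rightarrow> bool) \<Rightarrow> 'a set \<Rightarrow> bool" where
  "induced_connected E S \<longleftrightarrow> S \<noteq> {} \<and>
     (\<forall>x\<in>S. \<forall>y\<in>S. (x, y) \<in> {(a, b). a \<in> S \<and> b \<in> S \<and> E a b}\<^sup>*)"

definition coalition_game :: "'a set \<Rightarrow> ('a \<Rightarrow> 'a \<Rightarrow> bool) \<Rightarrow> ('a set \<Rightarrow> nat) \<Rightarrow> bool" where
  "coalition_game V E v \<longleftrightarrow> v {} = 0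
     \<and> (\<forall>S\<subseteq>V. \<not> induced_connected E S \<longrightarrow> v S = 0)
     \<and> (\<exists>S\<subseteq>V. v S \<noteq> 0)"

definition frac_feasible :: "'a set \<Rightarrow> ('a set \<Rightarrow> real) \<Rightarrow> bool" where
  "frac_feasible V y \<longleftrightarrow> (\<forall>S\<subseteq>V. y S \<ge> 0)
     \<and> (\<forall>i\<in>V. (\<Sum>S\<in>{S\<in>Pow V. i \<in> S}. y S) \<le> 1)"

definition rho_f :: "'a set \<Rightarrow> ('a set \<Rightarrow> nat) \<Rightarrow> real" where
  "rho_f V v = Sup {(\<Sum>S\<in>Pow V. real (v S) * y S) | y. frac_feasible V y}"

definition rho :: "'a set \<Rightarrow> ('a set \<Rightarrow> nat) \<Rightarrow> nat" where
  "rho V v = Max {(\<Sum>S\<in>F. v S) | F. F \<subseteq> Pow V \<and> pairwise disjnt F}"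

end

theory Submission
  imports Defs
begin

lemma cover_bound:
  fixes C :: "'a set set" and y :: "'a set \<Rightarrow> real"
  assumes "finite C" "finite S0" "\<forall>T\<in>C. y T \<ge> 0"
    "\<forall>i. (\<Sum>T\<in>{T\<in>C. i\<in>T}. y T) \<le> 1"
    "\<forall>T\<in>D. T \<inter> S0 \<noteq> {}" "D \<subseteq> C"
  shows "(\<Sum>T\<in>D. y T) \<le> real (card S0)"
proof -
  have fD: "finite D" using assms(1,6) finite_subset by blast
  have "(\<Sum>T\<in>D. y T) \<le> (\<Sum>T\<in>D. \<Sum>i\<in>S0. (if i \<in> T then y T else 0))"
  proof (rule sum_mono)
    fix T assume T: "T \<in> D"
    have "(\<Sum>i\<in>S0. (if i \<in> T then y T else 0)) = (\<Sum>i\<in>{i\<in>S0. i\<in>T}. y T)"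
      using assms(2) by (rule sum.inter_filter[symmetric])
    also have "\<dots> = real (card (S0 \<inter> T)) * y T"
      by (simp add: Int_def)
    finally have e: "(\<Sum>i\<in>S0. (if i \<in> T then y T else 0)) = real (card (S0 \<inter> T)) * y T" .
    have "card (S0 \<inter> T) \<ge> 1" using assms(2,5) T
      by (metis One_nat_def Suc_leI card_gt_0_iff finite_Int inf_commute)
    moreover have "y T \<ge> 0" using assms(3,6) T by blast
    ultimately have "1 * y T \<le> real (card (S0 \<inter> T)) * y T"
      by (intro mult_right_mono) auto
    then show "y T \<le> (\<Sum>i\<in>S0. (if i \<in> T then y T else 0))" unfolding e by simp
  qed
  also have "\<dots> = (\<Sum>i\<in>S0. \<Sum>T\<in>D. (if i \<in> T then y T else 0))"
    by (rule sum.swap)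
  also have "\<dots> = (\<Sum>i\<in>S0. \<Sum>T\<in>{T\<in>D. i\<in>T}. y T)"
    using fD by (simp add: sum.inter_filter)
  also have "\<dots> \<le> (\<Sum>i\<in>S0. 1)"
  proof (rule sum_mono)
    fix i assume "i \<in> S0"
    have "(\<Sum>T\<in>{T\<in>D. i\<in>T}. y T) \<le> (\<Sum>T\<in>{T\<in>C. i\<in>T}. y T)"
      apply (rule sum_mono2) using assms by auto
    also have "\<dots> \<le> 1" using assms(4) by blast
    finally show "(\<Sum>T\<in>{T\<in>D. i\<in>T}. y T) \<le> 1" .
  qed
  also have "\<dots> = real (card S0)" by simp
  finally show ?thesis .
qed

lemma greedy:
  fixes C :: "'a set set" and y :: "'a set \<Rightarrow> real" and v :: "'a set \<Rightarrow> nat"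
  assumes "finite C" "\<forall>S\<in>C. S \<noteq> {} \<and> finite S \<and> real (card S) \<le> s" "\<forall>S\<in>C. y S \<ge> 0"
    "\<forall>i. (\<Sum>T\<in>{T\<in>C. i\<in>T}. y T) \<le> 1"
  shows "\<exists>F\<subseteq>C. pairwise disjnt F \<and> (\<Sum>S\<in>C. real (v S) * y S) \<le> s * real (\<Sum>S\<in>F. v S)"
  using assms
proof (induction "card C" arbitrary: C rule: less_induct)
  case less
  show ?case
  proof (cases "C = {}")
    case True then show ?thesis by (intro exI[of _ "{}"]) auto
  next
    case False
    obtain S0 where S0: "S0 \<in> C" "\<forall>T\<in>C. v T \<le> v S0"
    proof -
      have "Max (v ` C) \<in> v ` C" using less.prems(1) False by simp
      then obtain S0 where "S0 \<in> C" "v S0 = Max (v ` C)" by auto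
      moreover have "\<forall>T\<in>C. v T \<le> Max (v ` C)" using less.prems(1) by simp
      ultimately show ?thesis using that by auto
    qed
    define C' where "C' = {T\<in>C. T \<inter> S0 = {}}"
    define D where "D = C - C'"
    have S0ne: "S0 \<noteq> {}" "finite S0" "real (card S0) \<le> s" using less.prems(2) S0 by auto
    have "C' \<subseteq> C" unfolding C'_def by auto
    moreover have "S0 \<notin> C'" unfolding C'_def using S0ne by auto
    ultimately have "C' \<subset> C" using S0 by blast
    hence cl: "card C' < card C" using less.prems(1) by (simp add: psubset_card_mono)
    have fC': "finite C'" using \<open>C' \<subseteq> C\<close> less.prems(1) finite_subset by blast
    have h4: "\<forall>i. (\<Sum>T\<in>{T\<in>C'. i\<in>T}. y T) \<le> 1"
    proof
      fix i
      have "(\<Sum>T\<in>{T\<in>C'. i\<in>T}. y T) \<le> (\<Sum>T\<in>{T\<in>C. i\<in>T}. y T)"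
        apply (rule sum_mono2) using less.prems \<open>C' \<subseteq> C\<close> by auto
      then show "(\<Sum>T\<in>{T\<in>C'. i\<in>T}. y T) \<le> 1" using less.prems(4) by (meson order.trans)
    qed
    obtain F' where F': "F' \<subseteq> C'" "pairwise disjnt F'"
       "(\<Sum>S\<in>C'. real (v S) * y S) \<le> s * real (\<Sum>S\<in>F'. v S)"
      using less.hyps[OF cl fC' _ _ h4] less.prems \<open>C' \<subseteq> C\<close> by blast
    have Dsub: "D \<subseteq> C" and Dint: "\<forall>T\<in>D. T \<inter> S0 \<noteq> {}" unfolding D_def C'_def by auto
    have yD: "(\<Sum>T\<in>D. y T) \<le> real (card S0)"
      by (rule cover_bound[OF less.prems(1) S0ne(2) less.prems(3) less.prems(4) Dint Dsub])
    have "(\<Sum>S\<in>D. real (v S) * y S) \<le> (\<Sum>S\<in>D. real (v S0) * y S)"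
    proof (rule sum_mono)
      fix S assume "S \<in> D"
      then have "S \<in> C" using Dsub by blast
      then have "real (v S) \<le> real (v S0)" "0 \<le> y S" using S0 less.prems(3) by auto
      then show "real (v S) * y S \<le> real (v S0) * y S" by (rule mult_right_mono)
    qed
    also have "\<dots> = real (v S0) * (\<Sum>S\<in>D. y S)" by (simp add: sum_distrib_left)
    also have "\<dots> \<le> real (v S0) * s"
      using yD S0ne(3) by (meson mult_left_mono of_nat_0_le_iff order.trans)
    finally have sD: "(\<Sum>S\<in>D. real (v S) * y S) \<le> real (v S0) * s" .
    have split: "(\<Sum>S\<in>C. real (v S) * y S) = (\<Sum>S\<in>C'. real (v S) * y S) + (\<Sum>S\<in>D. real (v S) * y S)"
      unfolding D_def using less.prems(1) \<open>C' \<subseteq> C\<close> by (metis add.commute sum.subset_diff)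
    have fF': "finite F'" using F'(1) fC' finite_subset by blast
    have S0F: "S0 \<notin> F'" using F'(1) \<open>S0 \<notin> C'\<close> by blast
    have "(\<Sum>S\<in>insert S0 F'. v S) = v S0 + (\<Sum>S\<in>F'. v S)" using fF' S0F by simp
    hence "(\<Sum>S\<in>C. real (v S) * y S) \<le> s * real (\<Sum>S\<in>insert S0 F'. v S)"
      using split sD F'(3) by (simp add: algebra_simps)
    moreover have "insert S0 F' \<subseteq> C" using S0 F'(1) \<open>C' \<subseteq> C\<close> by blast
    moreover have "pairwise disjnt (insert S0 F')"
      using F' unfolding pairwise_insert C'_def disjnt_def by auto
    ultimately show ?thesis by blast
  qed
qed

lemma rho_ge:
  assumes "finite V" "F \<subseteq> Pow V" "pairwise disjnt F"
  shows "(\<Sum>S\<in>F. v S) \<le> rho V v"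
  unfolding rho_def
proof (rule Max_ge)
  have "{(\<Sum>S\<in>F. v S) | F. F \<subseteq> Pow V \<and> pairwise disjnt F} \<subseteq> (\<lambda>F. \<Sum>S\<in>F. v S) ` Pow (Pow V)"
    by blast
  then show "finite {(\<Sum>S\<in>F. v S) | F. F \<subseteq> Pow V \<and> pairwise disjnt F}"
  proof (rule finite_subset)
    show "finite ((\<lambda>F. \<Sum>S\<in>F. v S) ` Pow (Pow V))" using assms(1) by simp
  qed
  show "(\<Sum>S\<in>F. v S) \<in> {(\<Sum>S\<in>F. v S) | F. F \<subseteq> Pow V \<and> pairwise disjnt F}"
    using assms by blast
qed

theorem lemma5p4:
  fixes V :: "'a set" and E :: "'a \<Rightarrow> 'a \<Rightarrow> bool" and v :: "'a set \<Rightarrow> nat"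
  assumes "simple_graph V E" and "card V \<ge> 1" and "coalition_game V E v"
  shows "rho_f V v / real (rho V v) \<le> 2 * sqrt (real (card V))"
proof -
  have fV: "finite V" using assms(1) unfolding simple_graph_def by auto
  define n where "n = card V"
  define s where "s = sqrt (real n)"
  have n1: "real n \<ge> 1" using assms(2) n_def by simp
  have s1: "s \<ge> 1" using n1 s_def by simp
  have ss: "s * s = real n" using s_def by simp
  obtain S1 where S1: "S1 \<subseteq> V" "v S1 \<noteq> 0" using assms(3) unfolding coalition_game_def by blast
  have v0: "v {} = 0" using assms(3) unfolding coalition_game_def by blast
  have vle: "real (v S) \<le> real (rho V v)" if "S \<subseteq> V" for S
  proof -
    have "(\<Sum>T\<in>{S}. v T) \<le> rho V v" by (rule rho_ge) (use fV that in auto)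
    then show ?thesis by simp
  qed
  have rpos: "real (rho V v) > 0" using vle[OF S1(1)] S1(2) by linarith
  define r where "r = real (rho V v)"
  have key: "(\<Sum>S\<in>Pow V. real (v S) * y S) \<le> 2 * s * r" if fy: "frac_feasible V y" for y
  proof -
    have y0: "\<forall>S\<in>Pow V. y S \<ge> 0" and hy1: "\<forall>i\<in>V. (\<Sum>S\<in>{S\<in>Pow V. i\<in>S}. y S) \<le> 1"
      using fy unfolding frac_feasible_def by auto
    define Sm where "Sm = {S\<in>Pow V. S \<noteq> {} \<and> real (card S) \<le> s}"
    define L where "L = Pow V - Sm"
    have fP: "finite (Pow V)" using fV by simp
    have SmP: "Sm \<subseteq> Pow V" unfolding Sm_def by auto
    have fSm: "finite Sm" using fP SmP finite_subset by blast
    have split: "(\<Sum>S\<in>Pow V. real (v S) * y S) = (\<Sum>S\<in>Sm. real (v S) * y S) + (\<Sum>S\<in>L. real (v S) * y S)"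
      unfolding L_def using fP SmP by (metis add.commute sum.subset_diff)
    have h2: "\<forall>S\<in>Sm. S \<noteq> {} \<and> finite S \<and> real (card S) \<le> s"
      unfolding Sm_def using fV finite_subset by auto
    have h3: "\<forall>S\<in>Sm. y S \<ge> 0" using y0 SmP by blast
    have h4: "\<forall>i. (\<Sum>T\<in>{T\<in>Sm. i\<in>T}. y T) \<le> 1"
    proof
      fix i
      show "(\<Sum>T\<in>{T\<in>Sm. i\<in>T}. y T) \<le> 1"
      proof (cases "i \<in> V")
        case True
        have "(\<Sum>T\<in>{T\<in>Sm. i\<in>T}. y T) \<le> (\<Sum>S\<in>{S\<in>Pow V. i\<in>S}. y S)"
          apply (rule sum_mono2) using fP SmP y0 by auto
        then show ?thesis using hy1 True by (meson order.trans)
      next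
        case False
        then have e: "{T\<in>Sm. i\<in>T} = {}" using SmP by auto
        show ?thesis unfolding e by simp
      qed
    qed
    obtain F where F: "F \<subseteq> Sm" "pairwise disjnt F"
      "(\<Sum>S\<in>Sm. real (v S) * y S) \<le> s * real (\<Sum>S\<in>F. v S)"
      using greedy[OF fSm h2 h3 h4] by blast
    have "(\<Sum>S\<in>F. v S) \<le> rho V v" by (rule rho_ge) (use fV F SmP in auto)
    hence "real (\<Sum>S\<in>F. v S) \<le> r" unfolding r_def by (simp only: of_nat_le_iff)
    hence "s * real (\<Sum>S\<in>F. v S) \<le> s * r" using s1 by (intro mult_left_mono) auto
    hence small: "(\<Sum>S\<in>Sm. real (v S) * y S) \<le> s * r" using F(3) by linarith
    have "(\<Sum>S\<in>L. real (v S) * y S) \<le> (\<Sum>S\<in>L. (r / s) * (real (card S) * y S))"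
    proof (rule sum_mono)
      fix S assume S: "S \<in> L"
      then have SV: "S \<subseteq> V" and yS: "y S \<ge> 0" unfolding L_def using y0 by auto
      have rs: "r / s \<ge> 0" using rpos s1 r_def by simp
      show "real (v S) * y S \<le> (r / s) * (real (card S) * y S)"
      proof (cases "S = {}")
        case True then show ?thesis using v0 by simp
      next
        case False
        then have cs: "real (card S) > s" using S unfolding L_def Sm_def by auto
        have "real (v S) * y S \<le> r * y S" using vle[OF SV] yS r_def by (simp add: mult_right_mono)
        also have "r * y S = (r / s) * (s * y S)" using s1 by simp
        also have "\<dots> \<le> (r / s) * (real (card S) * y S)"
          using rs cs yS by (intro mult_left_mono mult_right_mono) auto
        finally show ?thesis .
      qed
    qed
    also have "\<dots> = (r / s) * (\<Sum>S\<in>L. real (card S) * y S)" by (simp add: sum_distrib_left)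
    also have "\<dots> \<le> (r / s) * (\<Sum>S\<in>Pow V. real (card S) * y S)"
    proof (rule mult_left_mono)
      show "(\<Sum>S\<in>L. real (card S) * y S) \<le> (\<Sum>S\<in>Pow V. real (card S) * y S)"
        apply (rule sum_mono2) using fP y0 unfolding L_def by auto
      show "0 \<le> r / s" using rpos s1 r_def by simp
    qed
    also have "(\<Sum>S\<in>Pow V. real (card S) * y S) = (\<Sum>S\<in>Pow V. \<Sum>i\<in>V. (if i \<in> S then y S else 0))"
    proof (rule sum.cong)
      fix S assume "S \<in> Pow V"
      then have SV: "S \<subseteq> V" by simp
      have "(\<Sum>i\<in>V. (if i \<in> S then y S else 0)) = (\<Sum>i\<in>{i\<in>V. i\<in>S}. y S)"
        using fV by (rule sum.inter_filter[symmetric])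
      also have "{i\<in>V. i\<in>S} = S" using SV by auto
      finally show "real (card S) * y S = (\<Sum>i\<in>V. (if i \<in> S then y S else 0))" by simp
    qed simp
    also have "\<dots> = (\<Sum>i\<in>V. \<Sum>S\<in>Pow V. (if i \<in> S then y S else 0))" by (rule sum.swap)
    also have "\<dots> = (\<Sum>i\<in>V. \<Sum>S\<in>{S\<in>Pow V. i\<in>S}. y S)" by (rule sum.cong[OF refl]) (rule sum.inter_filter[symmetric, OF fP])
    also have "(r / s) * \<dots> \<le> (r / s) * (\<Sum>i\<in>V. 1)"
    proof (rule mult_left_mono)
      show "(\<Sum>i\<in>V. \<Sum>S\<in>{S\<in>Pow V. i\<in>S}. y S) \<le> (\<Sum>i\<in>V. 1)"
        by (rule sum_mono) (use hy1 in blast)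
      show "0 \<le> r / s" using rpos s1 r_def by simp
    qed
    also have "(\<Sum>i\<in>V. (1::real)) = s * s" using ss n_def by simp
    also have "(r / s) * (s * s) = s * r" using s1 by simp
    finally have large: "(\<Sum>S\<in>L. real (v S) * y S) \<le> s * r" .
    show ?thesis using split small large by linarith
  qed
  have ne: "{(\<Sum>S\<in>Pow V. real (v S) * y S) | y. frac_feasible V y} \<noteq> {}"
  proof -
    have "frac_feasible V (\<lambda>_. 0)" unfolding frac_feasible_def by simp
    then show ?thesis by blast
  qed
  have "rho_f V v \<le> 2 * s * r" unfolding rho_f_def
    by (rule cSup_least[OF ne]) (use key in blast)
  then have "rho_f V v / r \<le> 2 * s" using rpos r_def by (simp add: pos_divide_le_eq)
  then show ?thesis unfolding r_def s_def n_def .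
qed

end
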